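(* Let $\alpha\in(0,2]$ and $\nu>0$. Let $X_1,X_2,\ldots$ be independent identically distributed random variables such that $$\frac{1}{n^{1/\alpha}}\sum_{i=1}^n X_i\Longrightarrow S_{\alpha,0}\quad (n\to\infty).$$ For each $n\in\mathbb{N}$ let $N_n$ be a random variable, independent of $X_1,X_2,\ldots$, having the negative binomial distribution with parameters $\nu$ and $p=1/n$. Then $$\frac{1}{n^{1/\alpha}}\sum_{i=1}^{N_n}X_i\Longrightarrow L_{\alpha,\nu}\quad(n\to\infty).$$
   Context: $\Longrightarrow$ denotes convergence in distribution. $S_{\alpha,0}$ denotes a symmetric strictly stable random variable with characteristic function $e^{-|t|^\alpha}$. The negative binomial distribution with parameters $\nu>0$, $p\in(0,1)$ is given by $\mathsf{P}(N=k)=\frac{\Gamma(\nu+k-1)}{(k-1)!\,\Gamma(\nu)}p^\nu(1-p)^{k-1}$, $k=1,2,\ldots$. $L_{\alpha,\nu}$ denotes a random variable with characteristic function $(1+|t|^{\alpha})^{-\nu}$, $t\in\mathbb{R}$. *)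

theory Defs
  imports "HOL-Probability.Probability"
begin

definition negbin_prob :: "real \<Rightarrow> real \<Rightarrow> nat \<Rightarrow> real" where
  "negbin_prob \<nu> p k =
     (if k = 0 then 0
      else Gamma (\<nu> + real k - 1) / (fact (k - 1) * Gamma \<nu>) * p powr \<nu> * (1 - p) ^ (k - 1))"

end

theory Submission
  imports Defs
begin


lemma Gamma_nu_plus:
  fixes \<nu> :: real assumes "0 < \<nu>"
  shows "Gamma (\<nu> + real j) = pochhammer \<nu> j * Gamma \<nu>"
proof -
  have "\<nu> \<notin> \<int>\<^sub>\<le>\<^sub>0" using assms by (auto elim!: nonpos_Ints_cases)
  moreover have "Gamma \<nu> \<noteq> 0" using Gamma_real_pos[OF assms] by simp
  ultimately show ?thesis by (simp add: pochhammer_Gamma)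
qed

lemma negbin_gf:
  fixes \<nu> p :: real and z :: complex
  assumes nu: "0 < \<nu>" and p: "0 < p" "p \<le> 1" and z: "norm z \<le> 1"
  shows "(\<lambda>k. of_real (negbin_prob \<nu> p k) * z^k) sums
           (z * ((1 - of_real (1-p) * z) / of_real p) powr (- of_real \<nu>))"
proof -
  define w where "w = of_real (1-p) * z"
  have nw: "norm w < 1"
  proof -
    have "norm w = (1-p) * norm z" using p by (simp add: w_def norm_mult del: of_real_diff)
    also have "\<dots> \<le> 1 - p" using z p by (simp add: mult_left_le)
    finally show ?thesis using p by simp
  qed
  have w1: "1 - w \<noteq> 0" using nw by auto
  have gb: "(\<lambda>j. ((- of_real \<nu>) gchoose j) * (-w)^j) sums (1 + (-w)) powr (- of_real \<nu>)"
    by (rule gen_binomial_complex) (use nw in simp)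
  have trm: "((- of_real \<nu>) gchoose j) * (-w)^j = of_real (pochhammer \<nu> j / fact j) * w^j" for j
  proof -
    have "((- of_real \<nu> :: complex) gchoose j) = (-1)^j * pochhammer (of_real \<nu>) j / fact j"
      by (simp add: gbinomial_pochhammer)
    moreover have "(-w)^j = (-1)^j * w^j" by (rule power_minus)
    ultimately have "((- of_real \<nu>) gchoose j) * (-w)^j = ((-1)^j * (-1)^j) * (pochhammer (of_real \<nu>) j / fact j * w^j)"
      by (simp only: mult_ac times_divide_eq_left times_divide_eq_right)
    also have "(-1::complex)^j * (-1)^j = 1" by (metis power_mult_distrib mult_minus1 power_one minus_minus)
    finally show ?thesis by (simp add: pochhammer_of_real[symmetric])
  qed
  have nb: "negbin_prob \<nu> p (Suc j) = p powr \<nu> * (pochhammer \<nu> j / fact j) * (1-p)^j" for j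
  proof -
    have g: "Gamma \<nu> \<noteq> 0" using Gamma_real_pos[OF nu] by simp
    have "negbin_prob \<nu> p (Suc j) = Gamma (\<nu> + real j) / (fact j * Gamma \<nu>) * p powr \<nu> * (1-p)^j"
      by (simp add: negbin_prob_def)
    also have "\<dots> = p powr \<nu> * (pochhammer \<nu> j / fact j) * (1-p)^j"
      unfolding Gamma_nu_plus[OF nu] using g by (simp add: field_simps)
    finally show ?thesis .
  qed
  have "(\<lambda>j. of_real (negbin_prob \<nu> p (Suc j)) * z^(Suc j)) sums
          ((z * of_real (p powr \<nu>)) * (1 + (-w)) powr (- of_real \<nu>))"
  proof -
    have "(\<lambda>j. (z * of_real (p powr \<nu>)) * (((- of_real \<nu>) gchoose j) * (-w)^j)) sums
          ((z * of_real (p powr \<nu>)) * (1 + (-w)) powr (- of_real \<nu>))"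
      by (rule sums_mult[OF gb])
    moreover have "(z * of_real (p powr \<nu>)) * (((- of_real \<nu>) gchoose j) * (-w)^j)
        = of_real (negbin_prob \<nu> p (Suc j)) * z^(Suc j)" for j
      unfolding trm nb by (simp add: w_def power_mult_distrib mult_ac del: of_real_diff)
    ultimately show ?thesis by simp
  qed
  hence "(\<lambda>k. of_real (negbin_prob \<nu> p k) * z^k) sums
          ((z * of_real (p powr \<nu>)) * (1 + (-w)) powr (- of_real \<nu>) + of_real (negbin_prob \<nu> p 0) * z^0)"
    by (rule sums_Suc)
  moreover have "of_real (p powr \<nu>) * (1 - w) powr (- of_real \<nu>) = ((1 - w) / of_real p) powr (- of_real \<nu>)"
  proof -
    have "((1 - w) / of_real p) powr (- of_real \<nu>) = exp (- of_real \<nu> * (Ln (1-w) - of_real (ln p)))"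
      using w1 p by (simp add: powr_def Ln_divide_of_real)
    also have "\<dots> = exp (- of_real \<nu> * Ln (1-w)) * exp (of_real (\<nu> * ln p))"
      by (simp add: algebra_simps flip: exp_add)
    also have "exp (of_real (\<nu> * ln p)) = of_real (p powr \<nu>)"
      using p by (simp add: powr_def exp_of_real mult.commute del: of_real_mult)
    finally show ?thesis using w1 by (simp add: powr_def mult.commute)
  qed
  ultimately show ?thesis by (simp add: negbin_prob_def w_def mult.assoc)
qed



lemma gamma_nn:
  fixes c \<nu> :: real assumes c: "0 < c" and nu: "0 < \<nu>"
  shows "(\<integral>\<^sup>+x. ennreal (indicator {0..} x * x powr (\<nu>-1) * exp (-(c*x))) \<partial>lborel)
         = ennreal (Gamma \<nu> / c powr \<nu>)"
proof -
  define f where "f = (\<lambda>x::real. ennreal (indicator {0..} x * x powr (\<nu>-1) * exp (-(c*x))))"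
  have [measurable]: "f \<in> borel_measurable borel" unfolding f_def by measurable
  have "(\<integral>\<^sup>+x. f x \<partial>lborel) = ennreal \<bar>1/c\<bar> * (\<integral>\<^sup>+x. f (0 + (1/c) * x) \<partial>lborel)"
    by (rule nn_integral_real_affine) (use c in auto)
  also have "(\<lambda>x. f (0 + (1/c) * x)) = (\<lambda>x. ennreal ((1/c) powr (\<nu>-1)) * ennreal (x powr (\<nu>-1) / exp x * indicator {0..} x))"
  proof
    fix x :: real
    show "f (0 + (1/c) * x) = ennreal ((1/c) powr (\<nu>-1)) * ennreal (x powr (\<nu>-1) / exp x * indicator {0..} x)"
    proof (cases "x \<ge> 0")
      case True
      have "(1/c * x) powr (\<nu>-1) = (1/c) powr (\<nu>-1) * x powr (\<nu>-1)"
        using c True by (simp add: powr_divide)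
      moreover have "exp (-(c * (1/c * x))) = 1 / exp x" using c by (simp add: exp_minus field_simps)
      ultimately show ?thesis using True c
        by (simp add: f_def ennreal_mult[symmetric] indicator_def field_simps)
    next
      case False
      then show ?thesis using c by (simp add: f_def indicator_def zero_le_mult_iff zero_le_divide_iff)
    qed
  qed
  also have "(\<integral>\<^sup>+x. ennreal ((1/c) powr (\<nu>-1)) * ennreal (x powr (\<nu>-1) / exp x * indicator {0..} x) \<partial>lborel)
      = ennreal ((1/c) powr (\<nu>-1)) * (\<integral>\<^sup>+x. ennreal (x powr (\<nu>-1) / exp x) * indicator {0..} x \<partial>lborel)"
  proof -
    have e: "ennreal (x powr (\<nu>-1) / exp x * indicator {0..} x) = ennreal (x powr (\<nu>-1) / exp x) * indicator {0..} x" for x :: real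
      by (simp add: indicator_def)
    show ?thesis unfolding e by (subst nn_integral_cmult) auto
  qed
  also have "(\<integral>\<^sup>+x. ennreal (x powr (\<nu>-1) / exp x) * indicator {0..} x \<partial>lborel) = ennreal (Gamma \<nu>)"
    by (rule nn_integral_has_integral_lebesgue'[OF _ Gamma_integral_real[OF nu]]) simp
  also have "ennreal \<bar>1/c\<bar> * (ennreal ((1/c) powr (\<nu>-1)) * ennreal (Gamma \<nu>)) = ennreal (Gamma \<nu> / c powr \<nu>)"
  proof -
    have "\<bar>1/c\<bar> * ((1/c) powr (\<nu>-1) * Gamma \<nu>) = Gamma \<nu> / c powr \<nu>"
    proof -
      have "(1/c) powr (\<nu>-1) = c powr (1 - \<nu>)" using c by (simp add: powr_divide powr_minus_divide powr_diff)
      moreover have "c powr (1-\<nu>) = c / c powr \<nu>" using c by (simp add: powr_diff)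
      ultimately show ?thesis using c by (simp add: field_simps)
    qed
    moreover have "0 \<le> Gamma \<nu>" using Gamma_real_pos[OF nu] by simp
    ultimately show ?thesis using c by (simp add: ennreal_mult[symmetric])
  qed
  finally show ?thesis unfolding f_def .
qed

definition gammaD :: "real \<Rightarrow> real measure" where
  "gammaD \<nu> = density lborel (\<lambda>x. ennreal (indicator {0..} x * x powr (\<nu>-1) * exp (-x) / Gamma \<nu>))"

lemma gammaD_laplace_nn:
  fixes s \<nu> :: real assumes s: "0 \<le> s" and nu: "0 < \<nu>"
  shows "(\<integral>\<^sup>+x. ennreal (exp (- (s * \<bar>x\<bar>))) \<partial>gammaD \<nu>) = ennreal ((1 + s) powr (-\<nu>))"
proof -
  have g: "0 < Gamma \<nu>" using Gamma_real_pos[OF nu] .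
  have "(\<integral>\<^sup>+x. ennreal (exp (- (s * \<bar>x\<bar>))) \<partial>gammaD \<nu>)
     = (\<integral>\<^sup>+x. ennreal (indicator {0..} x * x powr (\<nu>-1) * exp (-x) / Gamma \<nu>) * ennreal (exp (- (s * \<bar>x\<bar>))) \<partial>lborel)"
    unfolding gammaD_def by (subst nn_integral_density) auto
  also have "\<dots> = (\<integral>\<^sup>+x. ennreal (1 / Gamma \<nu>) * ennreal (indicator {0..} x * x powr (\<nu>-1) * exp (-((1+s)*x))) \<partial>lborel)"
    by (intro nn_integral_cong)
       (use g in \<open>auto simp: indicator_def ennreal_mult[symmetric] field_simps exp_add[symmetric]\<close>)
  also have "\<dots> = ennreal (1 / Gamma \<nu>) * ennreal (Gamma \<nu> / (1+s) powr \<nu>)"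
    by (subst nn_integral_cmult) (use gamma_nn[of "1+s" \<nu>] s nu in auto)
  also have "\<dots> = ennreal ((1 + s) powr (-\<nu>))"
    using g s by (simp add: ennreal_mult[symmetric] powr_minus field_simps)
  finally show ?thesis .
qed

lemma prob_space_gammaD:
  fixes \<nu> :: real assumes nu: "0 < \<nu>"
  shows "prob_space (gammaD \<nu>)"
proof
  have "emeasure (gammaD \<nu>) (space (gammaD \<nu>)) = (\<integral>\<^sup>+x. ennreal (exp (- (0 * \<bar>x\<bar>))) \<partial>gammaD \<nu>)"
    by (simp add: gammaD_def nn_integral_density emeasure_density)
  also have "\<dots> = 1" using gammaD_laplace_nn[of 0 \<nu>] nu by simp
  finally show "emeasure (gammaD \<nu>) (space (gammaD \<nu>)) = 1" .
qed

lemma gammaD_laplace: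
  fixes s \<nu> :: real assumes s: "0 \<le> s" and nu: "0 < \<nu>"
  shows "(\<integral>x. exp (- (s * \<bar>x\<bar>)) \<partial>gammaD \<nu>) = (1 + s) powr (-\<nu>)"
proof -
  have "(\<integral>x. exp (- (s * \<bar>x\<bar>)) \<partial>gammaD \<nu>) = enn2real (\<integral>\<^sup>+x. ennreal (exp (- (s * \<bar>x\<bar>))) \<partial>gammaD \<nu>)"
    by (rule integral_eq_nn_integral) (auto simp: gammaD_def)
  also have "\<dots> = (1 + s) powr (-\<nu>)" using gammaD_laplace_nn[OF s nu] by simp
  finally show ?thesis .
qed

lemma linnik_exists:
  fixes \<alpha> \<nu> :: real and S :: "real measure"
  assumes a: "0 < \<alpha>" and nu: "0 < \<nu>" and S: "real_distribution S"
    and chS: "\<And>t. char S t = complex_of_real (exp (- (\<bar>t\<bar> powr \<alpha>)))"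
  shows "\<exists>L. real_distribution L \<and> (\<forall>t. char L t = complex_of_real ((1 + \<bar>t\<bar> powr \<alpha>) powr (- \<nu>)))"
proof -
  interpret G: prob_space "gammaD \<nu>" by (rule prob_space_gammaD[OF nu])
  interpret S: real_distribution S by fact
  interpret GS: pair_prob_space "gammaD \<nu>" S ..
  have sG[simp]: "sets (gammaD \<nu>) = sets borel" by (simp add: gammaD_def)
  define h where "h = (\<lambda>(g::real, y::real). \<bar>g\<bar> powr (1/\<alpha>) * y)"
  have hb: "h \<in> borel_measurable (borel \<Otimes>\<^sub>M borel)" unfolding h_def by measurable
  have sGS: "sets (gammaD \<nu> \<Otimes>\<^sub>M S) = sets (borel \<Otimes>\<^sub>M borel)"
    by (rule sets_pair_measure_cong) auto
  have hm[measurable]: "h \<in> borel_measurable (gammaD \<nu> \<Otimes>\<^sub>M S)"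
    using hb by (subst measurable_cong_sets[OF sGS refl])
  define L where "L = distr (gammaD \<nu> \<Otimes>\<^sub>M S) borel h"
  have RL: "real_distribution L"
    unfolding L_def real_distribution_def real_distribution_axioms_def
    by (auto intro!: GS.P.prob_space_distr)
  have "char L t = complex_of_real ((1 + \<bar>t\<bar> powr \<alpha>) powr (- \<nu>))" for t
  proof -
    have "char L t = (\<integral>p. iexp (t * h p) \<partial>(gammaD \<nu> \<Otimes>\<^sub>M S))"
      unfolding char_def L_def by (simp add: integral_distr)
    also have "\<dots> = (\<integral>g. (\<integral>y. iexp (t * h (g, y)) \<partial>S) \<partial>gammaD \<nu>)"
    proof (rule GS.integral_fst'[symmetric])
      show "integrable (gammaD \<nu> \<Otimes>\<^sub>M S) (\<lambda>p. iexp (t * h p))"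
        by (rule GS.P.integrable_const_bound[where B=1]) (auto simp: norm_exp_i_times)
    qed
    also have "\<dots> = (\<integral>g. complex_of_real (exp (- (\<bar>t\<bar> powr \<alpha> * \<bar>g\<bar>))) \<partial>gammaD \<nu>)"
    proof (rule Bochner_Integration.integral_cong[OF refl])
      fix g :: real
      have "(\<integral>y. iexp (t * h (g, y)) \<partial>S) = char S (t * \<bar>g\<bar> powr (1/\<alpha>))"
        unfolding char_def h_def by (simp add: mult.assoc)
      moreover have "\<bar>t * \<bar>g\<bar> powr (1/\<alpha>)\<bar> powr \<alpha> = \<bar>t\<bar> powr \<alpha> * \<bar>g\<bar>"
        using a by (simp add: abs_mult powr_mult powr_powr)
      ultimately show "(\<integral>y. iexp (t * h (g, y)) \<partial>S) = complex_of_real (exp (- (\<bar>t\<bar> powr \<alpha> * \<bar>g\<bar>)))"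
        by (simp add: chS)
    qed
    also have "\<dots> = complex_of_real ((1 + \<bar>t\<bar> powr \<alpha>) powr (- \<nu>))"
      using gammaD_laplace[of "\<bar>t\<bar> powr \<alpha>" \<nu>] nu by simp
    finally show ?thesis .
  qed
  with RL show ?thesis by blast
qed



lemma (in prob_space) sigma_comp_sub:
  fixes Z :: "'a \<Rightarrow> 'd" and f :: "'d \<Rightarrow> 'c::topological_space"
  assumes Zm: "Z \<in> measurable M MZ" and fm: "f \<in> measurable MZ borel"
  shows "sigma_sets (space M) {(f \<circ> Z) -` A \<inter> space M | A. A \<in> sets (borel :: 'c measure)}
      \<subseteq> sets (vimage_algebra (space M) Z MZ)"
proof -
  have sa: "sigma_algebra (space M) (sets (vimage_algebra (space M) Z MZ))"
    using sets.sigma_algebra_axioms[of "vimage_algebra (space M) Z MZ"] by simp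
  have "{(f \<circ> Z) -` A \<inter> space M | A. A \<in> sets (borel :: 'c measure)} \<subseteq> sets (vimage_algebra (space M) Z MZ)"
  proof safe
    fix A :: "'c set" assume A: "A \<in> sets borel"
    have "(f \<circ> Z) -` A \<inter> space M = Z -` (f -` A \<inter> space MZ) \<inter> space M"
      using Zm by (auto simp: measurable_def)
    moreover have "f -` A \<inter> space MZ \<in> sets MZ" using fm A by (rule measurable_sets)
    ultimately have "(f \<circ> Z) -` A \<inter> space M \<in> {Z -` B \<inter> space M | B. B \<in> sets MZ}"
      by blast
    then show "(f \<circ> Z) -` A \<inter> space M \<in> sets (vimage_algebra (space M) Z MZ)"
      using Zm by (subst sets_vimage_algebra2) (auto simp: measurable_def)
  qed
  then show ?thesis using sigma_algebra.sigma_sets_subset[OF sa] by blast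
qed

lemma (in prob_space) indep_var_from_set:
  assumes I: "indep_set (sets (vimage_algebra (space M) N MN)) (sets (vimage_algebra (space M) Y MY))"
    and Nm: "N \<in> measurable M MN" and Ym: "Y \<in> measurable M MY"
    and gm: "g \<in> measurable MN (borel :: 'c::topological_space measure)" and hm: "h \<in> measurable MY borel"
  shows "indep_var borel (g \<circ> N) borel (h \<circ> Y)"
proof -
  have ev1: "sets (vimage_algebra (space M) N MN) \<subseteq> events"
    using I by (rule indep_setD_ev1)
  have ev2: "sets (vimage_algebra (space M) Y MY) \<subseteq> events"
    using I by (rule indep_setD_ev2)
  show ?thesis
    unfolding indep_var_eq
  proof (intro conjI)
    show "random_variable borel (g \<circ> N)" using Nm gm by (rule measurable_comp)
    show "random_variable borel (h \<circ> Y)" using Ym hm by (rule measurable_comp)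
    show "indep_set (sigma_sets (space M) {(g \<circ> N) -` A \<inter> space M |A. A \<in> sets borel})
      (sigma_sets (space M) {(h \<circ> Y) -` A \<inter> space M |A. A \<in> sets borel})"
      using I sigma_comp_sub[OF Nm gm] sigma_comp_sub[OF Ym hm] ev1 ev2 unfolding indep_sets2_eq by blast
  qed
qed

lemma (in prob_space) random_sum_char:
  fixes X :: "nat \<Rightarrow> 'a \<Rightarrow> real" and N :: "'a \<Rightarrow> nat" and c t :: real
  assumes indep: "indep_vars (\<lambda>_. borel) X UNIV"
    and iid: "\<And>i. distr M borel (X i) = distr M borel (X 0)"
    and Nm[measurable]: "N \<in> measurable M (count_space UNIV)"
    and NI: "indep_set (sets (vimage_algebra (space M) N (count_space UNIV)))
          (sets (vimage_algebra (space M) (\<lambda>\<omega> i. X i \<omega>) (Pi\<^sub>M UNIV (\<lambda>_. borel))))"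
  shows "char (distr M borel (\<lambda>\<omega>. (\<Sum>i<N \<omega>. X i \<omega>) / c)) t
     = (\<Sum>k. complex_of_real (prob {\<omega> \<in> space M. N \<omega> = k}) * char (distr M borel (X 0)) (t / c) ^ k)"
proof -
  have Xm[measurable]: "X i \<in> borel_measurable M" for i
    using indep by (auto simp: indep_vars_def)
  define Xv where "Xv = (\<lambda>\<omega> i. X i \<omega>)"
  have Xvm[measurable]: "Xv \<in> measurable M (Pi\<^sub>M UNIV (\<lambda>_. borel))"
    unfolding Xv_def by (rule measurable_PiM_single') (auto simp: space_PiM)
  define \<phi> where "\<phi> = char (distr M borel (X 0))"
  define f where "f = (\<lambda>k \<omega>. complex_of_real (indicator {k} (N \<omega>)) * iexp (t * (\<Sum>i<k. X i \<omega>) / c))"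
  have Nind[measurable]: "(\<lambda>\<omega>. complex_of_real (indicator {k} (N \<omega>))) \<in> borel_measurable M" for k
    by (rule measurable_compose[OF Nm]) simp
  have fm[measurable]: "f k \<in> borel_measurable M" for k unfolding f_def by measurable
  have fint: "integrable M (f k)" for k
    by (rule integrable_const_bound[where B=1]) (auto simp: f_def norm_mult indicator_def)
  have fk: "integral\<^sup>L M (f k) = complex_of_real (prob {\<omega> \<in> space M. N \<omega> = k}) * \<phi> (t / c) ^ k" for k
  proof -
    define g where "g = (\<lambda>n::nat. complex_of_real (indicator {k} n))"
    define h where "h = (\<lambda>x::nat \<Rightarrow> real. iexp (t * (\<Sum>i<k. x i) / c))"
    have gm: "g \<in> measurable (count_space UNIV) borel" by simp
    have hm: "h \<in> measurable (Pi\<^sub>M UNIV (\<lambda>_. borel)) borel" unfolding h_def by measurable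
    have IV2: "indep_var borel (g \<circ> N) borel (h \<circ> Xv)"
      by (rule indep_var_from_set[OF NI[folded Xv_def] Nm Xvm gm hm])
    have eqf: "f k = (\<lambda>\<omega>. (g \<circ> N) \<omega> * (h \<circ> Xv) \<omega>)"
      by (auto simp: f_def g_def h_def Xv_def indicator_def fun_eq_iff)
    have "integral\<^sup>L M (f k) = integral\<^sup>L M (g \<circ> N) * integral\<^sup>L M (h \<circ> Xv)"
      unfolding eqf
    proof (rule indep_var_lebesgue_integral[OF IV2])
      show "integrable M (g \<circ> N)"
        by (rule integrable_const_bound[where B=1]) (auto simp: g_def indicator_def)
      show "integrable M (h \<circ> Xv)"
        by (rule integrable_const_bound[where B=1]) (use hm in \<open>auto simp: h_def\<close>)
    qed
    also have "integral\<^sup>L M (g \<circ> N) = complex_of_real (prob {\<omega> \<in> space M. N \<omega> = k})"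
    proof -
      have "integral\<^sup>L M (g \<circ> N) = (\<integral>\<omega>. complex_of_real (indicator {\<omega> \<in> space M. N \<omega> = k} \<omega>) \<partial>M)"
        by (intro Bochner_Integration.integral_cong) (auto simp: g_def indicator_def)
      also have "\<dots> = complex_of_real (prob {\<omega> \<in> space M. N \<omega> = k})"
        by (subst integral_complex_of_real) simp
      finally show ?thesis .
    qed
    also have "integral\<^sup>L M (h \<circ> Xv) = \<phi> (t / c) ^ k"
    proof -
      have "integral\<^sup>L M (h \<circ> Xv) = char (distr M borel (\<lambda>\<omega>. \<Sum>i\<in>{..<k}. X i \<omega>)) (t / c)"
        unfolding char_def h_def Xv_def by (simp add: integral_distr algebra_simps comp_def)
      also have "\<dots> = (\<Prod>i\<in>{..<k}. char (distr M borel (X i)) (t / c))"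
        by (rule char_distr_sum[OF indep_vars_subset[OF indep]]) simp
      also have "\<dots> = \<phi> (t / c) ^ k"
      proof -
        have e: "char (distr M borel (X i)) (t / c) = \<phi> (t / c)" for i
          unfolding \<phi>_def by (subst iid) (rule refl)
        show ?thesis by (simp add: e)
      qed
      finally show ?thesis .
    qed
    finally show ?thesis .
  qed
  have sumf: "(\<Sum>k. f k \<omega>) = iexp (t * ((\<Sum>i<N \<omega>. X i \<omega>) / c))" if "\<omega> \<in> space M" for \<omega>
  proof -
    have "f k \<omega> = (if k = N \<omega> then iexp (t * (\<Sum>i<k. X i \<omega>) / c) else 0)" for k
      by (simp add: f_def indicator_def)
    have "(\<lambda>k. f k \<omega>) sums iexp (t * (\<Sum>i<N \<omega>. X i \<omega>) / c)"
      unfolding \<open>\<And>k. f k \<omega> = _\<close> by (rule sums_single)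
    thus ?thesis by (simp add: sums_iff)
  qed
  have summ: "summable (\<lambda>k. norm (f k \<omega>))" for \<omega>
  proof -
    have "norm (f k \<omega>) = (if k = N \<omega> then 1 else 0)" for k
      by (simp add: f_def indicator_def norm_mult)
    thus ?thesis using sums_single[of "N \<omega>" "\<lambda>_. 1::real"]
      by (simp add: sums_iff)
  qed
  have summ2: "summable (\<lambda>k. (\<integral>\<omega>. norm (f k \<omega>) \<partial>M))"
  proof -
    have "(\<integral>\<omega>. norm (f k \<omega>) \<partial>M) = prob {\<omega> \<in> space M. N \<omega> = k}" for k
    proof -
      have "(\<integral>\<omega>. norm (f k \<omega>) \<partial>M) = (\<integral>\<omega>. indicator {\<omega> \<in> space M. N \<omega> = k} \<omega> \<partial>M)"
        by (intro Bochner_Integration.integral_cong) (auto simp: f_def indicator_def norm_mult)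
      thus ?thesis by simp
    qed
    moreover have "summable (\<lambda>k. prob {\<omega> \<in> space M. N \<omega> = k})"
    proof -
      have "(\<lambda>k. prob {\<omega> \<in> space M. N \<omega> = k}) sums prob (\<Union>k. {\<omega> \<in> space M. N \<omega> = k})"
        by (rule finite_measure_UNION) (auto simp: disjoint_family_on_def)
      thus ?thesis by (simp add: sums_iff)
    qed
    ultimately show ?thesis by simp
  qed
  have "char (distr M borel (\<lambda>\<omega>. (\<Sum>i<N \<omega>. X i \<omega>) / c)) t = (\<integral>\<omega>. iexp (t * ((\<Sum>i<N \<omega>. X i \<omega>) / c)) \<partial>M)"
    unfolding char_def by (subst integral_distr) auto
  also have "\<dots> = (\<integral>\<omega>. (\<Sum>k. f k \<omega>) \<partial>M)"
    by (intro Bochner_Integration.integral_cong) (auto simp: sumf)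
  also have "\<dots> = (\<Sum>k. integral\<^sup>L M (f k))"
    by (rule integral_suminf[OF fint]) (auto simp: summ summ2)
  finally show ?thesis by (simp add: fk \<phi>_def)
qed



lemma norm_iexp_sub1: "norm (iexp y - 1) \<le> min 2 \<bar>y\<bar>"
proof -
  have "norm (iexp y - 1) \<le> \<bar>y\<bar>" using iexp_approx1[of y 0] by simp
  moreover have "norm (iexp y - 1) \<le> 2"
    using norm_triangle_ineq4[of "iexp y" 1] by (simp add: norm_exp_i_times)
  ultimately show ?thesis by simp
qed

lemma min2_bound: "0 \<le> h \<Longrightarrow> \<bar>min 2 (h * \<bar>x::real\<bar>)\<bar> \<le> 2"
  by (simp add: min_def)

definition Wf :: "real measure \<Rightarrow> real \<Rightarrow> real" where
  "Wf \<mu> h = (\<integral>x. min 2 (h * \<bar>x\<bar>) \<partial>\<mu>)"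

lemma char_diff_le:
  assumes "real_distribution \<mu>" "\<bar>u - v\<bar> \<le> h"
  shows "norm (char \<mu> u - char \<mu> v) \<le> Wf \<mu> h"
proof -
  interpret real_distribution \<mu> by fact
  have i1: "integrable \<mu> (\<lambda>x. iexp (u * x))" by (rule integrable_iexp) auto
  have i2: "integrable \<mu> (\<lambda>x. iexp (v * x))" by (rule integrable_iexp) auto
  have "char \<mu> u - char \<mu> v = (\<integral>x. iexp (u * x) - iexp (v * x) \<partial>\<mu>)"
    unfolding char_def using i1 i2 by simp
  also have "norm \<dots> \<le> (\<integral>x. norm (iexp (u * x) - iexp (v * x)) \<partial>\<mu>)"
    by (rule integral_norm_bound)
  also have "\<dots> \<le> (\<integral>x. min 2 (h * \<bar>x\<bar>) \<partial>\<mu>)"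
  proof (rule integral_mono)
    show "integrable \<mu> (\<lambda>x. norm (iexp (u * x) - iexp (v * x)))" using i1 i2 by auto
    show "integrable \<mu> (\<lambda>x. min 2 (h * \<bar>x\<bar>))"
      by (rule integrable_const_bound[where B=2]) (use assms(2) min2_bound in auto)
    fix x :: real
    have "iexp (u * x) - iexp (v * x) = iexp (v * x) * (iexp ((u - v) * x) - 1)"
      by (simp add: algebra_simps flip: exp_add)
    hence "norm (iexp (u * x) - iexp (v * x)) = norm (iexp ((u - v) * x) - 1)"
      by (simp add: norm_mult norm_exp_i_times)
    also have "\<dots> \<le> min 2 \<bar>(u - v) * x\<bar>" by (rule norm_iexp_sub1)
    also have "\<dots> \<le> min 2 (h * \<bar>x\<bar>)"
      using assms(2) mult_right_mono[OF assms(2), of "\<bar>x\<bar>"] by (auto simp: abs_mult)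
    finally show "norm (iexp (u * x) - iexp (v * x)) \<le> min 2 (h * \<bar>x\<bar>)" .
  qed
  finally show ?thesis unfolding Wf_def .
qed

lemma Wf_small:
  assumes "real_distribution \<mu>" "0 < e"
  shows "\<exists>h>0. Wf \<mu> h < e"
proof -
  interpret real_distribution \<mu> by fact
  have "(\<lambda>m. (\<integral>x. min 2 (1 / (Suc m) * \<bar>x\<bar>) \<partial>\<mu>)) \<longlonglongrightarrow> (\<integral>x. 0 \<partial>\<mu>)"
  proof (rule integral_dominated_convergence[where w="\<lambda>_. 2"])
    show "AE x in \<mu>. (\<lambda>m. min 2 (1 / real (Suc m) * \<bar>x\<bar>)) \<longlonglongrightarrow> 0"
    proof (rule AE_I2)
      fix x :: real
      have "(\<lambda>m. 1 / real (Suc m) * \<bar>x\<bar>) \<longlonglongrightarrow> 0 * \<bar>x\<bar>"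
        by (intro tendsto_mult tendsto_const) (rule LIMSEQ_inverse_real_of_nat[unfolded inverse_eq_divide])
      hence "(\<lambda>m. min 2 (1 / real (Suc m) * \<bar>x\<bar>)) \<longlonglongrightarrow> min 2 (0 * \<bar>x\<bar>)"
        by (intro tendsto_min tendsto_const)
      thus "(\<lambda>m. min 2 (1 / real (Suc m) * \<bar>x\<bar>)) \<longlonglongrightarrow> 0" by simp
    qed
  qed auto
  hence "(\<lambda>m. Wf \<mu> (1 / Suc m)) \<longlonglongrightarrow> 0" by (simp add: Wf_def)
  from order_tendstoD(2)[OF this assms(2)] obtain m where "Wf \<mu> (1 / Suc m) < e"
    by (auto simp: eventually_sequentially)
  thus ?thesis by (intro exI[of _ "1 / Suc m"]) auto
qed

lemma char_uniform_conv:
  assumes \<mu>: "\<And>n. real_distribution (\<mu> n)" and S: "real_distribution S"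
    and wc: "weak_conv_m \<mu> S" and e: "0 < e"
  shows "eventually (\<lambda>n. \<forall>u\<in>{-T..T}. norm (char (\<mu> n) u - char S u) < e) sequentially"
proof -
  obtain h where h: "h > 0" "Wf S h < e / 4" using Wf_small[OF S, of "e/4"] e by auto
  have Wconv: "(\<lambda>n. Wf (\<mu> n) h) \<longlonglongrightarrow> Wf S h"
    unfolding Wf_def
    by (rule weak_conv_imp_integral_bdd_continuous_conv[OF \<mu> S wc, where B=2])
       (use h(1) min2_bound in \<open>auto intro!: continuous_intros\<close>)
  have ev1: "eventually (\<lambda>n. Wf (\<mu> n) h < e / 4) sequentially"
  proof -
    have "Wf S h < e / 4" by fact
    from order_tendstoD(2)[OF Wconv this] show ?thesis .
  qed
  define m where "m = nat \<lceil>2 * \<bar>T\<bar> / h\<rceil>"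
  define G where "G = (\<lambda>j. - \<bar>T\<bar> + real j * h) ` {0..m}"
  have fG: "finite G" by (simp add: G_def)
  have ev2: "eventually (\<lambda>n. \<forall>v\<in>G. norm (char (\<mu> n) v - char S v) < e / 4) sequentially"
  proof (rule eventually_ball_finite[OF fG], rule ballI)
    fix v
    have "(\<lambda>n. char (\<mu> n) v) \<longlonglongrightarrow> char S v" by (rule levy_continuity1[OF \<mu> S wc])
    hence "(\<lambda>n. char (\<mu> n) v - char S v) \<longlonglongrightarrow> 0" by (simp add: LIM_zero)
    hence "(\<lambda>n. norm (char (\<mu> n) v - char S v)) \<longlonglongrightarrow> 0" by (simp add: tendsto_norm_zero)
    from order_tendstoD(2)[OF this, of "e/4"] e
    show "eventually (\<lambda>n. norm (char (\<mu> n) v - char S v) < e / 4) sequentially" by simp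
  qed
  have grid: "\<exists>v\<in>G. \<bar>u - v\<bar> \<le> h" if u: "u \<in> {-T..T}" for u
  proof -
    define j where "j = nat \<lfloor>(u + \<bar>T\<bar>) / h\<rfloor>"
    have u0: "0 \<le> (u + \<bar>T\<bar>) / h" using u h by auto
    have j1: "real j \<le> (u + \<bar>T\<bar>) / h" using u0 by (simp add: j_def)
    have j2: "(u + \<bar>T\<bar>) / h < real j + 1" using u0 by (simp add: j_def)
    have "j \<le> m"
    proof -
      have "(u + \<bar>T\<bar>) / h \<le> 2 * \<bar>T\<bar> / h" using u h by (auto intro: divide_right_mono)
      thus ?thesis unfolding j_def m_def by (intro nat_mono floor_le_ceiling[THEN order_trans] ceiling_mono)
    qed
    have "\<bar>u - (- \<bar>T\<bar> + real j * h)\<bar> \<le> h"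
    proof -
      have "real j * h \<le> u + \<bar>T\<bar>" using j1 h by (simp add: field_simps)
      moreover have "u + \<bar>T\<bar> < real j * h + h" using j2 h by (simp add: field_simps)
      ultimately show ?thesis by auto
    qed
    moreover have "- \<bar>T\<bar> + real j * h \<in> G" unfolding G_def using \<open>j \<le> m\<close> by (intro imageI) simp
    ultimately show ?thesis by blast
  qed
  show ?thesis
    using ev1 ev2
  proof eventually_elim
    case (elim n)
    show ?case
    proof
      fix u assume u: "u \<in> {-T..T}"
      obtain v where v: "v \<in> G" "\<bar>u - v\<bar> \<le> h" using grid[OF u] by blast
      have "norm (char (\<mu> n) u - char S u) \<le>
          norm (char (\<mu> n) u - char (\<mu> n) v) + norm (char (\<mu> n) v - char S v) + norm (char S v - char S u)"
      proof -
        have eq: "char (\<mu> n) u - char S u = (char (\<mu> n) u - char (\<mu> n) v) + (char (\<mu> n) v - char S v) + (char S v - char S u)"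
          by simp
        show ?thesis unfolding eq
          by (rule order_trans[OF norm_triangle_ineq add_right_mono[OF norm_triangle_ineq]])
      qed
      also have "\<dots> < e / 4 + e / 4 + e / 4"
      proof -
        have "norm (char (\<mu> n) u - char (\<mu> n) v) \<le> Wf (\<mu> n) h" by (rule char_diff_le[OF \<mu> v(2)])
        moreover have "norm (char S v - char S u) \<le> Wf S h"
          by (rule char_diff_le[OF S]) (use v(2) in auto)
        ultimately show ?thesis using elim v(1) h(2) by fastforce
      qed
      finally show "norm (char (\<mu> n) u - char S u) < e" using e by simp
    qed
  qed
qed



lemma near1_not_nonpos: fixes z :: complex assumes "norm (z - 1) < 1" shows "z \<notin> \<real>\<^sub>\<le>\<^sub>0"
proof
  assume "z \<in> \<real>\<^sub>\<le>\<^sub>0"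
  then obtain r where r: "z = of_real r" "r \<le> 0" by (rule nonpos_Reals_cases)
  have "norm (z - 1) = \<bar>r - 1\<bar>" unfolding r(1) by (metis norm_of_real of_real_1 of_real_diff)
  with assms r(2) show False by simp
qed

lemma expq_cont: "((\<lambda>w::complex. if w = 0 then 1 else (exp w - 1) / w) \<longlongrightarrow> 1) (at 0)"
proof -
  have "DERIV exp (0::complex) :> exp 0" by (rule DERIV_exp)
  hence "((\<lambda>h::complex. (exp (0 + h) - exp 0) / h) \<longlongrightarrow> 1) (at 0)" by (simp add: DERIV_def)
  hence "((\<lambda>w::complex. (exp w - 1) / w) \<longlongrightarrow> 1) (at 0)" by simp
  moreover have "eventually (\<lambda>w::complex. (exp w - 1) / w = (if w = 0 then 1 else (exp w - 1) / w)) (at 0)"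
    by (auto simp: eventually_at_filter)
  ultimately show ?thesis by (rule Lim_transform_eventually)
qed

lemma log_limit:
  fixes \<phi> :: "real \<Rightarrow> complex" and \<alpha> t :: real and \<mu> :: "nat \<Rightarrow> real measure" and S
  assumes a: "0 < \<alpha>" and \<mu>: "\<And>n. real_distribution (\<mu> n)" and S: "real_distribution S"
    and chS: "\<And>u. char S u = complex_of_real (exp (-(\<bar>u\<bar> powr \<alpha>)))"
    and wc: "weak_conv_m \<mu> S"
    and ch\<mu>: "\<And>n u. n \<ge> 1 \<Longrightarrow> char (\<mu> n) u = \<phi> (u / real n powr (1/\<alpha>)) ^ n"
    and \<phi>c: "\<And>u. isCont \<phi> u" and \<phi>0: "\<phi> 0 = 1"
  shows "(\<lambda>n. of_nat n * (1 - \<phi> (t / real n powr (1/\<alpha>)))) \<longlonglongrightarrow> complex_of_real (\<bar>t\<bar> powr \<alpha>)"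
proof -
  define c where "c = (\<lambda>n::nat. real n powr (1/\<alpha>))"
  have cpos: "n \<ge> 1 \<Longrightarrow> 0 < c n" for n by (simp add: c_def)
  have inv0: "(\<lambda>n. real n powr (-(1/\<alpha>))) \<longlonglongrightarrow> 0"
    by (rule tendsto_neg_powr) (use a in \<open>auto intro: filterlim_real_sequentially\<close>)
  have invc: "n \<ge> 1 \<Longrightarrow> 1 / c n = real n powr (-(1/\<alpha>))" for n
    by (simp add: c_def powr_minus divide_inverse)
  obtain \<delta> where \<delta>: "\<delta> > 0" "\<And>y. \<bar>y\<bar> < \<delta> \<Longrightarrow> norm (\<phi> y - 1) < 1/2"
  proof -
    from \<phi>c[of 0] have "\<forall>e>0. \<exists>d>0. \<forall>y. dist y 0 < d \<longrightarrow> dist (\<phi> y) (\<phi> 0) < e"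
      unfolding continuous_at_eps_delta by simp
    then obtain d where "d > 0" "\<And>y. dist y 0 < d \<Longrightarrow> dist (\<phi> y) (\<phi> 0) < 1/2"
      by (meson half_gt_zero_iff zero_less_one)
    thus ?thesis using that[of d] \<phi>0 by (auto simp: dist_norm)
  qed
  have ev_small: "eventually (\<lambda>n. n \<ge> 1 \<and> \<bar>t\<bar> / c n < \<delta>) sequentially"
  proof -
    have "(\<lambda>n. \<bar>t\<bar> * real n powr (-(1/\<alpha>))) \<longlonglongrightarrow> \<bar>t\<bar> * 0" by (intro tendsto_mult tendsto_const inv0)
    from order_tendstoD(2)[OF this, of \<delta>] \<delta>(1)
    have "eventually (\<lambda>n. \<bar>t\<bar> * real n powr (-(1/\<alpha>)) < \<delta>) sequentially" by simp
    moreover have "eventually (\<lambda>n. n \<ge> (1::nat)) sequentially" by (rule eventually_ge_at_top)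
    ultimately show ?thesis
    proof eventually_elim
      case (elim n) thus ?case using invc[of n] by (simp add: divide_inverse)
    qed
  qed
  define B where "B = exp (- (\<bar>t\<bar> powr \<alpha>))"
  have B: "B > 0" by (simp add: B_def)
  have ev_unif: "eventually (\<lambda>n. \<forall>u\<in>{-\<bar>t\<bar>..\<bar>t\<bar>}. norm (char (\<mu> n) u - char S u) < B / 2) sequentially"
    by (rule char_uniform_conv[OF \<mu> S wc]) (use B in simp)
  have ev_im: "eventually (\<lambda>n. n \<ge> 1 \<and> \<bar>t\<bar> / c n < \<delta> \<and>
       \<bar>Im (of_nat n * Ln (\<phi> (t / c n)) + of_real (\<bar>t\<bar> powr \<alpha>))\<bar> < pi / 2) sequentially"
    using ev_small ev_unif
  proof eventually_elim
    case (elim n)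
    hence n1: "n \<ge> 1" and sm: "\<bar>t\<bar> / c n < \<delta>" and un: "\<And>u. u \<in> {-\<bar>t\<bar>..\<bar>t\<bar>} \<Longrightarrow> norm (char (\<mu> n) u - char S u) < B / 2"
      by auto
    have cn: "0 < c n" using cpos[OF n1] .
    define g where "g = (\<lambda>s::real. of_nat n * Ln (\<phi> (s * t / c n)) + of_real (\<bar>s * t\<bar> powr \<alpha>) :: complex)"
    have near: "norm (\<phi> (s * t / c n) - 1) < 1/2" if s: "s \<in> {0..1}" for s
    proof (rule \<delta>(2))
      have "\<bar>s * t / c n\<bar> = s * (\<bar>t\<bar> / c n)" using s cn by (simp add: abs_mult)
      also have "\<dots> \<le> \<bar>t\<bar> / c n" using s cn by (intro mult_left_le_one_le) auto
      finally show "\<bar>s * t / c n\<bar> < \<delta>" using sm by simp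
    qed
    have nn: "\<phi> (s * t / c n) \<notin> \<real>\<^sub>\<le>\<^sub>0" if "s \<in> {0..1}" for s
      by (rule near1_not_nonpos) (use near[OF that] in simp)
    have cont: "continuous_on {0..1} g"
    proof -
      have c1: "continuous_on {0..1} (\<lambda>s. Ln (\<phi> (s * t / c n)))"
      proof (rule continuous_at_imp_continuous_on, rule ballI)
        fix s :: real assume s: "s \<in> {0..1}"
        have "isCont (\<lambda>s. \<phi> (s * t / c n)) s"
          by (rule isCont_o2[OF _ \<phi>c]) (use cn in \<open>intro continuous_intros, auto\<close>)
        thus "isCont (\<lambda>s. Ln (\<phi> (s * t / c n))) s" using nn[OF s] by (rule isCont_Ln')
      qed
      have c2: "continuous_on {0..1} (\<lambda>s. \<bar>s * t\<bar> powr \<alpha>)"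
        by (rule continuous_on_powr') (use a in \<open>auto intro!: continuous_intros\<close>)
      show ?thesis unfolding g_def
        by (intro continuous_intros c1 continuous_on_of_real c2)
    qed
    have cos_pos: "cos (Im (g s)) > 0" if s: "s \<in> {0..1}" for s
    proof -
      have st0: "\<bar>s * t\<bar> \<le> \<bar>t\<bar>" using s unfolding abs_mult by (intro mult_left_le_one_le) auto
      have st: "s * t \<in> {-\<bar>t\<bar>..\<bar>t\<bar>}" using st0 unfolding abs_le_iff by auto
      have pz: "\<phi> (s * t / c n) \<noteq> 0" using nn[OF s] by auto
      have eg: "exp (g s) = \<phi> (s * t / c n) ^ n * exp (of_real (\<bar>s * t\<bar> powr \<alpha>))"
        unfolding g_def by (simp add: exp_add exp_of_nat_mult pz)
      have ch: "char (\<mu> n) (s * t) = \<phi> (s * t / c n) ^ n" using ch\<mu>[OF n1] by (simp add: c_def)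
      have "norm (exp (g s) - 1) = norm ((char (\<mu> n) (s * t) - char S (s * t)) * exp (of_real (\<bar>s * t\<bar> powr \<alpha>)))"
      proof -
        have "char S (s * t) * exp (of_real (\<bar>s * t\<bar> powr \<alpha>)) = 1"
          by (simp add: chS exp_of_real[symmetric] flip: of_real_mult exp_add)
        thus ?thesis by (simp add: eg ch algebra_simps)
      qed
      also have "\<dots> = norm (char (\<mu> n) (s * t) - char S (s * t)) * exp (\<bar>s * t\<bar> powr \<alpha>)"
        by (simp add: norm_mult exp_of_real[symmetric])
      also have "\<dots> \<le> (B / 2) * exp (\<bar>t\<bar> powr \<alpha>)"
      proof (rule mult_mono)
        show "norm (char (\<mu> n) (s * t) - char S (s * t)) \<le> B / 2" using un[OF st] by simp
        have "\<bar>s * t\<bar> \<le> \<bar>t\<bar>" using st by auto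
        hence "\<bar>s * t\<bar> powr \<alpha> \<le> \<bar>t\<bar> powr \<alpha>" using a by (intro powr_mono2) auto
        thus "exp (\<bar>s * t\<bar> powr \<alpha>) \<le> exp (\<bar>t\<bar> powr \<alpha>)" by simp
      qed (use B in auto)
      also have "\<dots> = 1 / 2" by (simp add: B_def exp_minus field_simps)
      finally have "norm (exp (g s) - 1) \<le> 1/2" .
      hence "Re (exp (g s)) \<ge> 1/2"
        using abs_Re_le_cmod[of "exp (g s) - 1"] by auto
      hence "exp (Re (g s)) * cos (Im (g s)) > 0" by (simp add: Re_exp)
      thus ?thesis by (simp add: zero_less_mult_iff)
    qed
    have g0: "Im (g 0) = 0" by (simp add: g_def \<phi>0)
    have cIm: "continuous_on {0..1} (\<lambda>s. Im (g s))" by (intro continuous_intros cont)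
    have "\<bar>Im (g 1)\<bar> < pi / 2"
    proof (rule ccontr)
      assume "\<not> \<bar>Im (g 1)\<bar> < pi / 2"
      hence "Im (g 1) \<ge> pi / 2 \<or> Im (g 1) \<le> - (pi / 2)" by auto
      then obtain s where s: "s \<in> {0..1}" "\<bar>Im (g s)\<bar> = pi / 2"
      proof
        assume "Im (g 1) \<ge> pi / 2"
        from IVT'[of "\<lambda>s. Im (g s)" 0 "pi/2" 1, OF _ this _ cIm] g0 obtain s where
          "0 \<le> s" "s \<le> 1" "Im (g s) = pi / 2" by auto
        thus ?thesis using that[of s] pi_gt_zero by auto
      next
        assume "Im (g 1) \<le> - (pi / 2)"
        from IVT2'[of "\<lambda>s. Im (g s)" 1 "-(pi/2)" 0, OF this _ _ cIm] g0 obtain s where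
          "0 \<le> s" "s \<le> 1" "Im (g s) = - (pi / 2)" by auto
        thus ?thesis using that[of s] pi_gt_zero by auto
      qed
      hence "Im (g s) = pi / 2 \<or> Im (g s) = - (pi / 2)" by (auto simp: abs_if split: if_splits)
      hence "cos (Im (g s)) = 0" by (metis cos_pi_half cos_minus)
      with cos_pos[OF s(1)] show False by simp
    qed
    thus ?case using n1 sm by (simp add: g_def)
  qed
  define w where "w = (\<lambda>n. of_nat n * Ln (\<phi> (t / c n)) + of_real (\<bar>t\<bar> powr \<alpha>) :: complex)"
  have expw: "(\<lambda>n. exp (w n)) \<longlonglongrightarrow> 1"
  proof -
    have "(\<lambda>n. char (\<mu> n) t * exp (of_real (\<bar>t\<bar> powr \<alpha>))) \<longlonglongrightarrow> char S t * exp (of_real (\<bar>t\<bar> powr \<alpha>))"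
      by (intro tendsto_mult tendsto_const levy_continuity1[OF \<mu> S wc])
    moreover have "char S t * exp (of_real (\<bar>t\<bar> powr \<alpha>)) = 1"
      by (simp add: chS exp_of_real[symmetric] flip: of_real_mult exp_add)
    moreover have "eventually (\<lambda>n. char (\<mu> n) t * exp (of_real (\<bar>t\<bar> powr \<alpha>)) = exp (w n)) sequentially"
      using ev_im
    proof eventually_elim
      case (elim n)
      hence n1: "n \<ge> 1" and sm: "\<bar>t\<bar> / c n < \<delta>" by auto
      have "norm (\<phi> (t / c n) - 1) < 1/2" using \<delta>(2)[of "t / c n"] sm cpos[OF n1] by (simp add: abs_div)
      hence pz: "\<phi> (t / c n) \<noteq> 0" by auto
      show ?case using ch\<mu>[OF n1, of t] pz by (simp add: w_def c_def exp_add exp_of_nat_mult)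
    qed
    ultimately show ?thesis by (auto intro: Lim_transform_eventually)
  qed
  have w0: "w \<longlonglongrightarrow> 0"
  proof -
    have "(\<lambda>n. Ln (exp (w n))) \<longlonglongrightarrow> Ln 1"
      by (rule tendsto_Ln[OF expw]) simp
    moreover have "eventually (\<lambda>n. Ln (exp (w n)) = w n) sequentially"
      using ev_im
    proof eventually_elim
      case (elim n)
      hence "\<bar>Im (w n)\<bar> < pi / 2" by (simp add: w_def)
      thus ?case by (intro Ln_exp) auto
    qed
    ultimately show ?thesis by (auto intro: Lim_transform_eventually)
  qed
  have L: "(\<lambda>n. of_nat n * Ln (\<phi> (t / c n))) \<longlonglongrightarrow> - of_real (\<bar>t\<bar> powr \<alpha>)"
  proof -
    have "(\<lambda>n. w n - of_real (\<bar>t\<bar> powr \<alpha>)) \<longlonglongrightarrow> 0 - of_real (\<bar>t\<bar> powr \<alpha>)"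
      by (intro tendsto_diff w0 tendsto_const)
    thus ?thesis by (simp add: w_def)
  qed
  have tc0: "(\<lambda>n. t / c n) \<longlonglongrightarrow> 0"
  proof -
    have "(\<lambda>n. t * real n powr (-(1/\<alpha>))) \<longlonglongrightarrow> t * 0" by (intro tendsto_mult tendsto_const inv0)
    moreover have "eventually (\<lambda>n. t * real n powr (-(1/\<alpha>)) = t / c n) sequentially"
      using eventually_ge_at_top[of 1]
    proof eventually_elim
      case (elim n) show ?case using invc[OF elim] by (simp add: divide_inverse)
    qed
    ultimately show ?thesis by (auto intro: Lim_transform_eventually)
  qed
  have phin: "(\<lambda>n. \<phi> (t / c n)) \<longlonglongrightarrow> 1"
    using isCont_tendsto_compose[OF \<phi>c[of 0] tc0] \<phi>0 by simp
  have v0: "(\<lambda>n. Ln (\<phi> (t / c n))) \<longlonglongrightarrow> 0"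
    using tendsto_Ln[OF phin] by simp
  define q where "q = (\<lambda>w::complex. if w = 0 then 1 else (exp w - 1) / w)"
  have qc: "isCont q 0"
    unfolding isCont_def using expq_cont by (simp add: q_def)
  have qn: "(\<lambda>n. q (Ln (\<phi> (t / c n)))) \<longlonglongrightarrow> 1"
    using isCont_tendsto_compose[OF qc v0] by (simp add: q_def)
  have "(\<lambda>n. - (of_nat n * Ln (\<phi> (t / c n))) * q (Ln (\<phi> (t / c n)))) \<longlonglongrightarrow> - (- of_real (\<bar>t\<bar> powr \<alpha>)) * 1"
    by (intro tendsto_mult tendsto_minus L qn)
  moreover have "eventually (\<lambda>n. - (of_nat n * Ln (\<phi> (t / c n))) * q (Ln (\<phi> (t / c n)))
      = of_nat n * (1 - \<phi> (t / c n))) sequentially"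
    using ev_small
  proof eventually_elim
    case (elim n)
    hence "norm (\<phi> (t / c n) - 1) < 1/2" using \<delta>(2)[of "t / c n"] cpos[of n] by (simp add: abs_div)
    hence pz: "\<phi> (t / c n) \<noteq> 0" by auto
    show ?case
    proof (cases "Ln (\<phi> (t / c n)) = 0")
      case True
      hence "\<phi> (t / c n) = 1" using exp_Ln[OF pz] by (metis exp_zero)
      thus ?thesis using True by simp
    next
      case False
      thus ?thesis using exp_Ln[OF pz] by (simp add: q_def field_simps)
    qed
  qed
  ultimately have "(\<lambda>n. of_nat n * (1 - \<phi> (t / c n))) \<longlonglongrightarrow> complex_of_real (\<bar>t\<bar> powr \<alpha>)"
    by (auto intro: Lim_transform_eventually)
  thus ?thesis by (simp add: c_def)
qed



lemma (in prob_space) char_scaled_sum: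
  fixes X :: "nat \<Rightarrow> 'a \<Rightarrow> real"
  assumes indep: "indep_vars (\<lambda>_. borel) X UNIV"
    and iid: "\<And>i. distr M borel (X i) = distr M borel (X 0)"
  shows "char (distr M borel (\<lambda>\<omega>. (\<Sum>i<n. X i \<omega>) / c)) u = char (distr M borel (X 0)) (u / c) ^ n"
proof -
  have Xm[measurable]: "X i \<in> borel_measurable M" for i
    using indep by (auto simp: indep_vars_def)
  have "char (distr M borel (\<lambda>\<omega>. (\<Sum>i<n. X i \<omega>) / c)) u = (\<integral>\<omega>. iexp (u * ((\<Sum>i<n. X i \<omega>) / c)) \<partial>M)"
    unfolding char_def by (rule integral_distr) measurable
  also have "\<dots> = (\<integral>\<omega>. iexp ((u / c) * (\<Sum>i\<in>{..<n}. X i \<omega>)) \<partial>M)"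
    by (simp add: divide_inverse mult_ac)
  also have "\<dots> = char (distr M borel (\<lambda>\<omega>. \<Sum>i\<in>{..<n}. X i \<omega>)) (u / c)"
    unfolding char_def by (rule integral_distr[symmetric]) measurable
  also have "\<dots> = (\<Prod>i\<in>{..<n}. char (distr M borel (X i)) (u / c))"
    by (rule char_distr_sum[OF indep_vars_subset[OF indep]]) simp
  also have "\<dots> = char (distr M borel (X 0)) (u / c) ^ n"
  proof -
    have e: "char (distr M borel (X i)) (u / c) = char (distr M borel (X 0)) (u / c)" for i
      by (subst iid) (rule refl)
    have "(\<Prod>i\<in>{..<n}. char (distr M borel (X i)) (u / c)) = (\<Prod>i\<in>{..<n}. char (distr M borel (X 0)) (u / c))"
      by (rule prod.cong[OF refl e])
    thus ?thesis by simp
  qed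
  finally show ?thesis .
qed

theorem theorem6:
  fixes M :: "'a measure" and X :: "nat \<Rightarrow> 'a \<Rightarrow> real" and N :: "nat \<Rightarrow> 'a \<Rightarrow> nat"
    and \<alpha> \<nu> :: real
  assumes "prob_space M"
    and "0 < \<alpha>" and "\<alpha> \<le> 2" and "0 < \<nu>"
    and iid_indep: "prob_space.indep_vars M (\<lambda>_. borel) X UNIV"
    and iid_dist: "\<And>i. distr M borel (X i) = distr M borel (X 0)"
    and stable_lim: "\<exists>S. real_distribution S \<and>
        (\<forall>t. char S t = complex_of_real (exp (- (\<bar>t\<bar> powr \<alpha>)))) \<and>
        weak_conv_m (\<lambda>n. distr M borel (\<lambda>\<omega>. (\<Sum>i<n. X i \<omega>) / real n powr (1 / \<alpha>))) S"
    and N_meas: "\<And>n. n \<ge> 2 \<Longrightarrow> N n \<in> measurable M (count_space UNIV)"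
    and N_dist: "\<And>n k. n \<ge> 2 \<Longrightarrow>
        measure M {\<omega> \<in> space M. N n \<omega> = k} = negbin_prob \<nu> (1 / real n) k"
    and N_indep: "\<And>n. n \<ge> 2 \<Longrightarrow>
        prob_space.indep_set M
          (sets (vimage_algebra (space M) (N n) (count_space UNIV)))
          (sets (vimage_algebra (space M) (\<lambda>\<omega> i. X i \<omega>) (Pi\<^sub>M UNIV (\<lambda>_. borel))))"
  shows "\<exists>L. real_distribution L \<and>
        (\<forall>t. char L t = complex_of_real ((1 + \<bar>t\<bar> powr \<alpha>) powr (- \<nu>))) \<and>
        weak_conv_m (\<lambda>n. distr M borel (\<lambda>\<omega>. (\<Sum>i<N n \<omega>. X i \<omega>) / real n powr (1 / \<alpha>))) L"
proof -
  interpret P: prob_space M by fact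
  have a: "0 < \<alpha>" and nu: "0 < \<nu>" by fact+
  have Xm[measurable]: "X i \<in> borel_measurable M" for i
    using iid_indep by (auto simp: P.indep_vars_def)
  obtain S where S: "real_distribution S" and chS: "\<And>t. char S t = complex_of_real (exp (- (\<bar>t\<bar> powr \<alpha>)))"
    and wc: "weak_conv_m (\<lambda>n. distr M borel (\<lambda>\<omega>. (\<Sum>i<n. X i \<omega>) / real n powr (1 / \<alpha>))) S"
    using stable_lim by blast
  obtain L where L: "real_distribution L" and chL: "\<And>t. char L t = complex_of_real ((1 + \<bar>t\<bar> powr \<alpha>) powr (- \<nu>))"
    using linnik_exists[OF a nu S chS] by blast
  define \<phi> where "\<phi> = char (distr M borel (X 0))"
  have RX: "real_distribution (distr M borel (X 0))"
    by (rule P.real_distribution_distr) simp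
  have \<phi>c: "\<And>u. isCont \<phi> u" unfolding \<phi>_def by (rule real_distribution.isCont_char[OF RX])
  have \<phi>0: "\<phi> 0 = 1" unfolding \<phi>_def by (rule real_distribution.char_zero[OF RX])
  have \<phi>1: "norm (\<phi> u) \<le> 1" for u unfolding \<phi>_def by (rule real_distribution.cmod_char_le_1[OF RX])
  define c where "c = (\<lambda>n::nat. real n powr (1/\<alpha>))"
  have R\<mu>: "real_distribution (distr M borel (\<lambda>\<omega>. (\<Sum>i<n. X i \<omega>) / real n powr (1 / \<alpha>)))" for n
    by (rule P.real_distribution_distr) measurable
  have lim1: "(\<lambda>n. of_nat n * (1 - \<phi> (t / c n))) \<longlonglongrightarrow> complex_of_real (\<bar>t\<bar> powr \<alpha>)" for t
    unfolding c_def
  proof (rule log_limit[OF a R\<mu> S chS wc _ \<phi>c \<phi>0])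
    fix n :: nat and u :: real
    show "char (distr M borel (\<lambda>\<omega>. (\<Sum>i<n. X i \<omega>) / real n powr (1 / \<alpha>))) u = \<phi> (u / real n powr (1 / \<alpha>)) ^ n"
      unfolding \<phi>_def by (rule P.char_scaled_sum[OF iid_indep iid_dist])
  qed
  define \<mu>' where "\<mu>' = (\<lambda>n. distr M borel (\<lambda>\<omega>. (\<Sum>i<N n \<omega>. X i \<omega>) / real n powr (1 / \<alpha>)))"
  have R\<mu>': "real_distribution (\<mu>' n)" if "n \<ge> 2" for n
  proof -
    note [measurable] = N_meas[OF that]
    show ?thesis
      unfolding \<mu>'_def by (rule P.real_distribution_distr) measurable
  qed
  define F where "F = (\<lambda>t n. \<phi> (t / c n) * ((1 - of_real (1 - 1 / real n) * \<phi> (t / c n)) / of_real (1 / real n)) powr (- of_real \<nu>))"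
  have chF: "char (\<mu>' n) t = F t n" if n: "n \<ge> 2" for n t
  proof -
    have "char (\<mu>' n) t = (\<Sum>k. complex_of_real (P.prob {\<omega> \<in> space M. N n \<omega> = k}) * \<phi> (t / c n) ^ k)"
      unfolding \<mu>'_def \<phi>_def c_def
      by (rule P.random_sum_char[OF iid_indep iid_dist N_meas[OF n] N_indep[OF n]])
    also have "\<dots> = (\<Sum>k. complex_of_real (negbin_prob \<nu> (1 / real n) k) * \<phi> (t / c n) ^ k)"
      by (simp add: N_dist[OF n])
    also have "\<dots> = F t n"
    proof -
      have p1: "0 < 1 / real n" "1 / real n \<le> 1" using n by auto
      show ?thesis unfolding F_def by (rule sums_unique[OF negbin_gf[OF nu p1 \<phi>1], symmetric])
    qed
    finally show ?thesis .
  qed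
  have Flim: "F t \<longlonglongrightarrow> char L t" for t
  proof -
    define z where "z = (\<lambda>n. \<phi> (t / c n))"
    have l1: "(\<lambda>n. of_nat n * (1 - z n)) \<longlonglongrightarrow> complex_of_real (\<bar>t\<bar> powr \<alpha>)"
      using lim1[of t] by (simp add: z_def)
    have z1: "z \<longlonglongrightarrow> 1"
    proof -
      have "(\<lambda>n. (of_nat n * (1 - z n)) * (1 / of_nat n)) \<longlonglongrightarrow> complex_of_real (\<bar>t\<bar> powr \<alpha>) * 0"
        by (intro tendsto_mult l1 lim_1_over_n)
      moreover have "eventually (\<lambda>n. (of_nat n * (1 - z n)) * (1 / of_nat n) = 1 - z n) sequentially"
        using eventually_ge_at_top[of "1::nat"] by eventually_elim auto
      ultimately have "(\<lambda>n. 1 - z n) \<longlonglongrightarrow> 0" by (auto intro: Lim_transform_eventually)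
      hence "(\<lambda>n. 1 - (1 - z n)) \<longlonglongrightarrow> 1 - 0" by (intro tendsto_diff tendsto_const)
      thus ?thesis by simp
    qed
    have inner: "(\<lambda>n. of_nat n * (1 - z n) + z n) \<longlonglongrightarrow> complex_of_real (\<bar>t\<bar> powr \<alpha>) + 1"
      by (rule tendsto_add[OF l1 z1])
    have eqv: "eventually (\<lambda>n. (1 - of_real (1 - 1 / real n) * z n) / of_real (1 / real n) = of_nat n * (1 - z n) + z n) sequentially"
      using eventually_ge_at_top[of "1::nat"]
    proof eventually_elim
      case (elim n)
      hence "real n \<noteq> 0" by simp
      show ?case using \<open>real n \<noteq> 0\<close> by (simp add: field_simps)
    qed
    have nn: "complex_of_real (\<bar>t\<bar> powr \<alpha>) + 1 \<notin> \<real>\<^sub>\<le>\<^sub>0"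
    proof -
      have "complex_of_real (\<bar>t\<bar> powr \<alpha>) + 1 = complex_of_real (\<bar>t\<bar> powr \<alpha> + 1)" by simp
      moreover have "\<bar>t\<bar> powr \<alpha> + 1 > 0" by (simp add: add_nonneg_pos)
      ultimately show ?thesis by (auto simp: complex_nonpos_Reals_iff)
    qed
    have "(\<lambda>n. z n * (of_nat n * (1 - z n) + z n) powr (- of_real \<nu>)) \<longlonglongrightarrow>
        1 * (complex_of_real (\<bar>t\<bar> powr \<alpha>) + 1) powr (- of_real \<nu>)"
      by (rule tendsto_mult[OF z1 tendsto_powr_complex[OF nn inner tendsto_const]])
    moreover have "(complex_of_real (\<bar>t\<bar> powr \<alpha>) + 1) powr (- of_real \<nu>) = char L t"
    proof -
      have "(complex_of_real (\<bar>t\<bar> powr \<alpha>) + 1) powr (- of_real \<nu>) = complex_of_real (1 + \<bar>t\<bar> powr \<alpha>) powr complex_of_real (- \<nu>)"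
        by (simp add: add.commute)
      also have "\<dots> = complex_of_real ((1 + \<bar>t\<bar> powr \<alpha>) powr (- \<nu>))"
        by (rule powr_of_real) simp
      finally show ?thesis by (simp add: chL)
    qed
    moreover have "eventually (\<lambda>n. z n * (of_nat n * (1 - z n) + z n) powr (- of_real \<nu>) = F t n) sequentially"
      using eqv by eventually_elim (simp add: F_def z_def)
    ultimately show ?thesis by (auto intro: Lim_transform_eventually)
  qed
  have wc': "weak_conv_m (\<lambda>k. \<mu>' (k + 2)) L"
  proof (rule levy_continuity)
    show "real_distribution (\<mu>' (k + 2))" for k by (rule R\<mu>') simp
    show "real_distribution L" by (rule L)
    fix t
    have "(\<lambda>k. F t (k + 2)) \<longlonglongrightarrow> char L t" by (rule LIMSEQ_ignore_initial_segment[OF Flim])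
    thus "(\<lambda>k. char (\<mu>' (k + 2)) t) \<longlonglongrightarrow> char L t" by (simp add: chF)
  qed
  have "weak_conv_m \<mu>' L"
    unfolding weak_conv_m_def weak_conv_def
  proof (intro allI impI)
    fix x assume "isCont (cdf L) x"
    hence "(\<lambda>k. cdf (\<mu>' (k + 2)) x) \<longlonglongrightarrow> cdf L x"
      using wc' unfolding weak_conv_m_def weak_conv_def by blast
    thus "(\<lambda>n. cdf (\<mu>' n) x) \<longlonglongrightarrow> cdf L x" by (rule LIMSEQ_offset)
  qed
  thus ?thesis using L chL unfolding \<mu>'_def by blast
qed

end
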